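(* Let $T$ be a finite set, let $X=(X_t)_{t\in T}$ be a random process with $\max_{t\in T}\mathbf{E}|X_t|<\infty$, let $K\in\mathbb{N}$ and $\mu\in\mathcal{P}_K$. Let $X^{(1)},X^{(2)},\ldots$ be i.i.d. copies of $X$ and for $M\in\mathbb{N}$, $\mathbf{t}=(\mathbf{t}_1,\dots,\mathbf{t}_M)\in T^M$ define $X_{\mathbf{t}}=\frac1M\sum_{i=1}^M X^{(i)}_{\mathbf{t}_i}$. Then $$\mathscr{F}(X,\mu)=\lim_{N\to\infty}\mathbf{E}\Big[\sup_{\mathbf{t}\in\mathcal{T}_N(\mu)}X_{\mathbf{t}}\Big].$$
   Context: $\mathcal{P}_K=\{\frac1K\sum_{i=1}^K\delta_{t_i}: t_1,\dots,t_K\in T\}$ is the set of probability measures on $T$ whose atom probabilities are integer multiples of $1/K$. For $N\in\mathbb{N}$ and $\mu\in\mathcal{P}_K$, $\mathcal{T}_N(\mu)=\{\mathbf{t}\in T^{NK}: \frac{1}{NK}\sum_{i=1}^{NK}\delta_{\mathbf{t}_i}=\mu\}$, the set of sequences of length $NK$ in which each $t\in T$ appears exactly $NK\mu(\{t\})$ times. Fernique's functional: for a probability measure $P_X$ on $\mathbb{R}^T$ with $\int\|x\|\,P_X(dx)<\infty$ and a probability measure $\mu$ on $T$, $\mathscr{F}(P_X,\mu)=\sup\mathbf{E}[X_Z]$ over all couplings $(X,Z)$ with $X\sim P_X$, $Z\sim\mu$; for a process $X$, $\mathscr{F}(X,\mu)=\mathscr{F}(P_X,\mu)$ with $P_X$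 the law of $X$. *)

theory Defs
  imports "HOL-Probability.Probability"
begin

text \<open>The finite index set T is a finite type 'n; a process indexed by T is a
random vector with values in real ^ 'n (component t is x $ t).
Probability measures on T are pmfs on 'n.\<close>

definition in_PK :: "nat \<Rightarrow> 'n::finite pmf \<Rightarrow> bool" where
  "in_PK K mu \<longleftrightarrow> (\<forall>t. \<exists>k::nat. pmf mu t = real k / real K)"

definition typeclass_seqs :: "nat \<Rightarrow> nat \<Rightarrow> 'n::finite pmf \<Rightarrow> 'n list set" where
  "typeclass_seqs K N mu =
     {ts. length ts = N * K \<and> (\<forall>t. real (count_list ts t) = real (N * K) * pmf mu t)}"

definition coupling :: "(real ^ 'n::finite) measure \<Rightarrow> 'n pmf
    \<Rightarrow> ((real ^ 'n) \<times> 'n) measure \<Rightarrow> bool" where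
  "coupling P mu Q \<longleftrightarrow>
     prob_space Q \<and>
     sets Q = sets (borel \<Otimes>\<^sub>M count_space UNIV) \<and>
     distr Q borel fst = P \<and>
     distr Q (count_space UNIV) snd = measure_pmf mu"

definition fernique :: "(real ^ 'n::finite) measure \<Rightarrow> 'n pmf \<Rightarrow> real" where
  "fernique P mu = (SUP Q \<in> {Q. coupling P mu Q}. \<integral>p. (fst p) $ (snd p) \<partial>Q)"

end

theory Submission imports Defs begin

definition dnat :: "nat \<Rightarrow> nat \<Rightarrow> nat" where "dnat a b = (a - b) + (b - a)"

lemma count_list_update:
  assumes "i < length xs"
  shows "count_list (xs[i:=y]) t = count_list xs t - (if xs!i = t then 1 else 0) + (if y = t then 1 else 0)"
proof -
  have "count_list (xs[i:=y]) t = count (mset (xs[i:=y])) t" by (simp add: count_mset)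
  also have "\<dots> = count (add_mset y (mset xs - {#xs!i#})) t" using assms by (simp add: mset_update)
  also have "\<dots> = count_list xs t - (if xs!i = t then 1 else 0) + (if y = t then 1 else 0)"
    by (auto simp: count_mset)
  finally show ?thesis .
qed

lemma fix_exists:
  fixes c :: "'n::finite \<Rightarrow> nat" and z :: "'n list"
  assumes "length z = n" "(\<Sum>t\<in>UNIV. c t) = n"
  shows "\<exists>s. length s = n \<and> (\<forall>t. count_list s t = c t) \<and>
             card {i. i < n \<and> s!i \<noteq> z!i} \<le> (\<Sum>t\<in>UNIV. dnat (count_list z t) (c t))"
  using assms(1)
proof (induction "\<Sum>t\<in>UNIV. dnat (count_list z t) (c t)" arbitrary: z rule: less_induct)
  case less
  show ?case
  proof (cases "\<forall>t. count_list z t = c t")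
    case True
    then show ?thesis using less.prems by (intro exI[of _ z]) auto
  next
    case False
    have sz: "(\<Sum>t\<in>UNIV. count_list z t) = n" using less.prems by (simp add: sum_count_set)
    have ex1: "\<exists>t1. count_list z t1 > c t1"
    proof (rule ccontr)
      assume "\<not> ?thesis"
      then have le: "\<And>t. count_list z t \<le> c t" by (simp add: not_less)
      from False obtain t0 where "count_list z t0 \<noteq> c t0" by blast
      with le have "count_list z t0 < c t0" using le_neq_implies_less by blast
      then have "(\<Sum>t\<in>UNIV. count_list z t) < (\<Sum>t\<in>UNIV. c t)"
        using le by (intro sum_strict_mono_ex1) auto
      then show False using sz assms(2) by simp
    qed
    have ex2: "\<exists>t2. count_list z t2 < c t2"
    proof (rule ccontr)
      assume "\<not> ?thesis"
      then have le: "\<And>t. c t \<le> count_list z t" by (simp add: not_less)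
      from False obtain t0 where "count_list z t0 \<noteq> c t0" by blast
      with le have "c t0 < count_list z t0" using le_neq_implies_less by metis
      then have "(\<Sum>t\<in>UNIV. c t) < (\<Sum>t\<in>UNIV. count_list z t)"
        using le by (intro sum_strict_mono_ex1) auto
      then show False using sz assms(2) by simp
    qed
    obtain t1 where t1: "count_list z t1 > c t1" using ex1 by blast
    obtain t2 where t2: "count_list z t2 < c t2" using ex2 by blast
    have "t1 \<noteq> t2" using t1 t2 by auto
    have "t1 \<in> set z" using t1 by (metis count_notin gr_implies_not0)
    then obtain i where i: "i < length z" "z!i = t1" by (auto simp: in_set_conv_nth)
    define z' where "z' = z[i:=t2]"
    have cz': "count_list z' t = count_list z t - (if t1 = t then 1 else 0) + (if t2 = t then 1 else 0)" for t
      unfolding z'_def using count_list_update[OF i(1)] i(2) by simp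
    have dlt: "dnat (count_list z' t) (c t) \<le> dnat (count_list z t) (c t)" for t
      using cz'[of t] t1 t2 \<open>t1 \<noteq> t2\<close> by (auto simp: dnat_def)
    have dlt1: "dnat (count_list z' t1) (c t1) < dnat (count_list z t1) (c t1)"
      using cz'[of t1] t1 t2 \<open>t1 \<noteq> t2\<close> by (auto simp: dnat_def)
    have dlt2: "dnat (count_list z' t2) (c t2) < dnat (count_list z t2) (c t2)"
      using cz'[of t2] t1 t2 \<open>t1 \<noteq> t2\<close> by (auto simp: dnat_def)
    have lt: "(\<Sum>t\<in>UNIV. dnat (count_list z' t) (c t)) < (\<Sum>t\<in>UNIV. dnat (count_list z t) (c t))"
      using dlt dlt1 by (intro sum_strict_mono_ex1) auto
    have lt2: "(\<Sum>t\<in>UNIV. dnat (count_list z' t) (c t)) + 1 \<le> (\<Sum>t\<in>UNIV. dnat (count_list z t) (c t))"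
      using lt by simp
    have "length z' = n" using less.prems by (simp add: z'_def)
    from less.hyps[OF lt this] obtain s where s: "length s = n" "\<forall>t. count_list s t = c t"
      "card {j. j < n \<and> s!j \<noteq> z'!j} \<le> (\<Sum>t\<in>UNIV. dnat (count_list z' t) (c t))" by blast
    have sub: "{j. j < n \<and> s!j \<noteq> z!j} \<subseteq> insert i {j. j < n \<and> s!j \<noteq> z'!j}"
      by (auto simp: z'_def)
    have "card {j. j < n \<and> s!j \<noteq> z!j} \<le> card (insert i {j. j < n \<and> s!j \<noteq> z'!j})"
      by (rule card_mono[OF _ sub]) auto
    also have "\<dots> \<le> card {j. j < n \<and> s!j \<noteq> z'!j} + 1" by (simp add: card_insert_if)
    finally show ?thesis using s lt2 by (intro exI[of _ s]) auto
  qed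
qed

definition habs :: "real^'n::finite \<Rightarrow> real" where "habs v = (\<Sum>t\<in>UNIV. \<bar>v $ t\<bar>)"

lemma habs_ge: "\<bar>v $ t\<bar> \<le> habs v"
  unfolding habs_def by (rule member_le_sum) auto

lemma habs_nonneg: "0 \<le> habs v"
  unfolding habs_def by (rule sum_nonneg) auto

lemma habs_measurable[measurable]: "habs \<in> borel_measurable borel"
  unfolding habs_def by measurable

definition Vf :: "nat \<Rightarrow> (nat \<Rightarrow> real^'n::finite) \<Rightarrow> 'n list \<Rightarrow> real" where
  "Vf n x s = (\<Sum>i<n. x i $ (s!i)) / real n"

lemma Vf_bound: "\<bar>Vf n x s\<bar> \<le> (\<Sum>i<n. habs (x i)) / real n"
proof -
  have "\<bar>\<Sum>i<n. x i $ (s!i)\<bar> \<le> (\<Sum>i<n. \<bar>x i $ (s!i)\<bar>)" by (rule sum_abs)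
  also have "\<dots> \<le> (\<Sum>i<n. habs (x i))" by (intro sum_mono habs_ge)
  finally show ?thesis unfolding Vf_def by (simp add: divide_right_mono)
qed

lemma Vf_measurable[measurable]:
  "(\<lambda>x. Vf n x s) \<in> borel_measurable (PiM {..<n} (\<lambda>_. (borel :: (real^'n::finite) measure)))"
proof -
  have "(\<lambda>x. x i $ s!i) \<in> borel_measurable (PiM {..<n} (\<lambda>_. (borel :: (real^'n::finite) measure)))"
    if "i \<in> {..<n}" for i
    by (rule measurable_compose[OF measurable_component_singleton[OF that]]) simp
  then show ?thesis unfolding Vf_def by (intro borel_measurable_divide borel_measurable_sum) auto
qed

lemma foldl_argmax:
  fixes f :: "'a \<Rightarrow> real"
  shows "foldl (\<lambda>b s. if f b < f s then s else b) b0 l \<in> insert b0 (set l) \<and>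
         (\<forall>s\<in>insert b0 (set l). f s \<le> f (foldl (\<lambda>b s. if f b < f s then s else b) b0 l))"
proof (induction l arbitrary: b0)
  case Nil
  then show ?case by simp
next
  case (Cons a l)
  let ?b = "if f b0 < f a then a else b0"
  from Cons.IH[of ?b] show ?case by (auto split: if_splits)
qed

lemma foldl_argmax_measurable:
  fixes g :: "'x \<Rightarrow> 'a::countable \<Rightarrow> real"
  assumes "b0 \<in> measurable N (count_space UNIV)" "\<And>s. (\<lambda>x. g x s) \<in> borel_measurable N"
  shows "(\<lambda>x. foldl (\<lambda>b s. if g x b < g x s then s else b) (b0 x) l) \<in> measurable N (count_space UNIV)"
  using assms(1)
proof (induction l arbitrary: b0)
  case Nil
  then show ?case by simp
next
  case (Cons a l)
  have gb[measurable]: "(\<lambda>x. g x (b0 x)) \<in> borel_measurable N"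
    by (rule measurable_compose_countable'[where I=UNIV, OF assms(2) Cons.prems]) simp
  have "(\<lambda>x. if g x (b0 x) < g x a then a else b0 x) \<in> measurable N (count_space UNIV)"
    using Cons.prems assms(2)[of a] by (intro measurable_If) auto
  from Cons.IH[OF this] show ?case by simp
qed

lemma PiM_comp_meas:
  assumes "i \<in> I" "g \<in> borel_measurable R"
  shows "(\<lambda>\<omega>. g (\<omega> i)) \<in> borel_measurable (PiM I (\<lambda>_. R))"
  by (rule measurable_compose[OF measurable_component_singleton[OF assms(1)] assms(2)])

lemma PiM_comp_int:
  fixes g :: "'a \<Rightarrow> real"
  assumes R: "prob_space R" and i: "i \<in> I" and g: "integrable R g"
  shows "integrable (PiM I (\<lambda>_. R)) (\<lambda>\<omega>. g (\<omega> i))"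
    "(\<integral>\<omega>. g (\<omega> i) \<partial>PiM I (\<lambda>_. R)) = (\<integral>x. g x \<partial>R)"
proof -
  have m: "(\<lambda>\<omega>. \<omega> i) \<in> measurable (PiM I (\<lambda>_. R)) R"
    by (rule measurable_component_singleton[OF i])
  have d: "distr (PiM I (\<lambda>_. R)) R (\<lambda>\<omega>. \<omega> i) = R"
    using distr_PiM_component[of I "\<lambda>_. R" i] R i by simp
  have gm: "g \<in> borel_measurable R" using g by simp
  show "integrable (PiM I (\<lambda>_. R)) (\<lambda>\<omega>. g (\<omega> i))"
    using integrable_distr_eq[OF m gm] g d by simp
  show "(\<integral>\<omega>. g (\<omega> i) \<partial>PiM I (\<lambda>_. R)) = (\<integral>x. g x \<partial>R)"
    using integral_distr[OF m gm] d by simp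
qed

lemma cross_zero:
  fixes c :: "'a \<Rightarrow> real"
  assumes R: "prob_space R" and I: "finite I" "i \<in> I" "j \<in> I" "i \<noteq> j"
    and c: "integrable R c" "(\<integral>x. c x \<partial>R) = 0"
  shows "(\<integral>\<omega>. c (\<omega> i) * c (\<omega> j) \<partial>PiM I (\<lambda>_. R)) = 0"
proof -
  interpret pps: product_prob_space "\<lambda>_. R" I by (rule product_prob_spaceI) (rule R)
  interpret R: prob_space R by (rule R)
  define f where "f k = (if k = i \<or> k = j then c else (\<lambda>_. 1))" for k
  have eq: "(\<Prod>k\<in>I. f k (\<omega> k)) = c (\<omega> i) * c (\<omega> j)" for \<omega>
  proof -
    have "(\<Prod>k\<in>I. f k (\<omega> k)) = (\<Prod>k\<in>I. if k = i \<or> k = j then c (\<omega> k) else 1)"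
      unfolding f_def by (intro prod.cong) auto
    also have "\<dots> = (\<Prod>k\<in>{k\<in>I. k = i \<or> k = j}. c (\<omega> k))"
      using I(1) by (rule prod.inter_filter[symmetric])
    also have "{k\<in>I. k = i \<or> k = j} = {i, j}" using I by auto
    finally show ?thesis using I(4) by simp
  qed
  have "(\<integral>\<omega>. (\<Prod>k\<in>I. f k (\<omega> k)) \<partial>PiM I (\<lambda>_. R)) = (\<Prod>k\<in>I. integral\<^sup>L R (f k))"
    using I(1) c(1) by (intro pps.product_integral_prod) (auto simp: f_def)
  also have "\<dots> = 0"
    using I(1,2) c(2) by (intro prod_zero bexI[of _ i]) (auto simp: f_def)
  finally show ?thesis unfolding eq .
qed

lemma second_moment:
  fixes c :: "'a \<Rightarrow> real"
  assumes R: "prob_space R" and I: "finite I"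
    and cm: "c \<in> borel_measurable R" and cb: "\<And>x. \<bar>c x\<bar> \<le> 1" and c0: "(\<integral>x. c x \<partial>R) = 0"
  shows "(\<integral>\<omega>. (\<Sum>i\<in>I. c (\<omega> i))\<^sup>2 \<partial>PiM I (\<lambda>_. R)) \<le> real (card I)"
proof -
  interpret PR: prob_space "PiM I (\<lambda>_. R)" by (intro prob_space_PiM R)
  interpret R: prob_space R by (rule R)
  have ci: "integrable R c" using cb cm by (intro R.integrable_const_bound[where B=1]) auto
  have mi: "(\<lambda>\<omega>. c (\<omega> i)) \<in> borel_measurable (PiM I (\<lambda>_. R))" if "i \<in> I" for i
    by (rule PiM_comp_meas[OF that cm])
  have intij: "integrable (PiM I (\<lambda>_. R)) (\<lambda>\<omega>. c (\<omega> i) * c (\<omega> j))" if "i \<in> I" "j \<in> I" for i j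
    using mi[OF that(1)] mi[OF that(2)] cb
    by (intro PR.integrable_const_bound[where B=1]) (auto simp: abs_mult intro!: mult_le_one)
  have sq: "(\<Sum>i\<in>I. c (\<omega> i))\<^sup>2 = (\<Sum>i\<in>I. \<Sum>j\<in>I. c (\<omega> i) * c (\<omega> j))" for \<omega>
    by (simp add: power2_eq_square sum_product)
  have "(\<integral>\<omega>. (\<Sum>i\<in>I. c (\<omega> i))\<^sup>2 \<partial>PiM I (\<lambda>_. R)) = (\<Sum>i\<in>I. \<Sum>j\<in>I. \<integral>\<omega>. c (\<omega> i) * c (\<omega> j) \<partial>PiM I (\<lambda>_. R))"
    unfolding sq using intij
    by (simp add: Bochner_Integration.integral_sum Bochner_Integration.integrable_sum)
  also have "\<dots> = (\<Sum>i\<in>I. \<integral>\<omega>. c (\<omega> i) * c (\<omega> i) \<partial>PiM I (\<lambda>_. R))"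
  proof (rule sum.cong[OF refl])
    fix i assume i: "i \<in> I"
    have "(\<Sum>j\<in>I. \<integral>\<omega>. c (\<omega> i) * c (\<omega> j) \<partial>PiM I (\<lambda>_. R)) =
          (\<integral>\<omega>. c (\<omega> i) * c (\<omega> i) \<partial>PiM I (\<lambda>_. R)) + (\<Sum>j\<in>I-{i}. \<integral>\<omega>. c (\<omega> i) * c (\<omega> j) \<partial>PiM I (\<lambda>_. R))"
      using I i by (simp add: sum.remove)
    also have "(\<Sum>j\<in>I-{i}. \<integral>\<omega>. c (\<omega> i) * c (\<omega> j) \<partial>PiM I (\<lambda>_. R)) = 0"
      using cross_zero[OF R I(1) i _ _ ci c0] by (intro sum.neutral) auto
    finally show "(\<Sum>j\<in>I. \<integral>\<omega>. c (\<omega> i) * c (\<omega> j) \<partial>PiM I (\<lambda>_. R)) = (\<integral>\<omega>. c (\<omega> i) * c (\<omega> i) \<partial>PiM I (\<lambda>_. R))" by simp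
  qed
  also have "\<dots> \<le> (\<Sum>i\<in>I. 1)"
  proof (rule sum_mono)
    fix i assume i: "i \<in> I"
    have "(\<integral>\<omega>. c (\<omega> i) * c (\<omega> i) \<partial>PiM I (\<lambda>_. R)) \<le> (\<integral>\<omega>. 1 \<partial>PiM I (\<lambda>_. R))"
    proof (rule integral_mono[OF intij[OF i i]])
      show "integrable (PiM I (\<lambda>_. R)) (\<lambda>\<omega>. 1::real)" by simp
      fix \<omega>
      have "\<bar>c (\<omega> i)\<bar> * \<bar>c (\<omega> i)\<bar> \<le> 1" using cb by (intro mult_le_one) auto
      then show "c (\<omega> i) * c (\<omega> i) \<le> 1" by (simp add: abs_mult_self_eq)
    qed
    then show "(\<integral>\<omega>. c (\<omega> i) * c (\<omega> i) \<partial>PiM I (\<lambda>_. R)) \<le> 1" by (simp add: PR.prob_space)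
  qed
  finally show ?thesis by simp
qed

lemma abs_le_sq: fixes y a :: real assumes "0 < a" shows "\<bar>y\<bar> \<le> y\<^sup>2 / a + a"
proof (cases "\<bar>y\<bar> \<le> a")
  case True
  then show ?thesis using assms by (simp add: add_increasing)
next
  case False
  then have "\<bar>y\<bar> * a \<le> \<bar>y\<bar> * \<bar>y\<bar>" using assms by (intro mult_left_mono) auto
  then have "\<bar>y\<bar> \<le> y\<^sup>2 / a" using assms by (simp add: pos_le_divide_eq power2_eq_square abs_mult_self_eq)
  then show ?thesis using assms by simp
qed

lemma abs_moment:
  fixes c :: "'a \<Rightarrow> real"
  assumes R: "prob_space R" and I: "finite I"
    and cm: "c \<in> borel_measurable R" and cb: "\<And>x. \<bar>c x\<bar> \<le> 1" and c0: "(\<integral>x. c x \<partial>R) = 0"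
    and a: "0 < a"
  shows "integrable (PiM I (\<lambda>_. R)) (\<lambda>\<omega>. \<bar>\<Sum>i\<in>I. c (\<omega> i)\<bar>)"
    "(\<integral>\<omega>. \<bar>\<Sum>i\<in>I. c (\<omega> i)\<bar> \<partial>PiM I (\<lambda>_. R)) \<le> real (card I) / a + a"
proof -
  interpret PR: prob_space "PiM I (\<lambda>_. R)" by (intro prob_space_PiM R)
  have m: "(\<lambda>\<omega>. \<Sum>i\<in>I. c (\<omega> i)) \<in> borel_measurable (PiM I (\<lambda>_. R))"
    by (intro borel_measurable_sum PiM_comp_meas[OF _ cm])
  have bnd: "\<bar>\<Sum>i\<in>I. c (\<omega> i)\<bar> \<le> real (card I)" for \<omega>
  proof -
    have "\<bar>\<Sum>i\<in>I. c (\<omega> i)\<bar> \<le> (\<Sum>i\<in>I. \<bar>c (\<omega> i)\<bar>)" by (rule sum_abs)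
    also have "\<dots> \<le> (\<Sum>i\<in>I. 1)" by (intro sum_mono cb)
    finally show ?thesis by simp
  qed
  have i1: "integrable (PiM I (\<lambda>_. R)) (\<lambda>\<omega>. \<Sum>i\<in>I. c (\<omega> i))"
    using m bnd by (intro PR.integrable_const_bound[where B="real (card I)"]) auto
  show "integrable (PiM I (\<lambda>_. R)) (\<lambda>\<omega>. \<bar>\<Sum>i\<in>I. c (\<omega> i)\<bar>)" using i1 by simp
  have i2: "integrable (PiM I (\<lambda>_. R)) (\<lambda>\<omega>. (\<Sum>i\<in>I. c (\<omega> i))\<^sup>2)"
  proof (rule PR.integrable_const_bound[where B="real (card I) * real (card I)"])
    show "AE x in PiM I (\<lambda>_. R). norm ((\<Sum>i\<in>I. c (x i))\<^sup>2) \<le> real (card I) * real (card I)"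
    proof (rule AE_I2)
      fix x
      have "\<bar>\<Sum>i\<in>I. c (x i)\<bar> * \<bar>\<Sum>i\<in>I. c (x i)\<bar> \<le> real (card I) * real (card I)"
        using bnd[of x] by (intro mult_mono) auto
      then show "norm ((\<Sum>i\<in>I. c (x i))\<^sup>2) \<le> real (card I) * real (card I)"
        by (simp add: power2_eq_square abs_mult)
    qed
  qed (use m in simp)
  have "(\<integral>\<omega>. \<bar>\<Sum>i\<in>I. c (\<omega> i)\<bar> \<partial>PiM I (\<lambda>_. R)) \<le> (\<integral>\<omega>. (\<Sum>i\<in>I. c (\<omega> i))\<^sup>2 / a + a \<partial>PiM I (\<lambda>_. R))"
    using i1 i2 by (intro integral_mono abs_le_sq a) auto
  also have "\<dots> = (\<integral>\<omega>. (\<Sum>i\<in>I. c (\<omega> i))\<^sup>2 \<partial>PiM I (\<lambda>_. R)) / a + a"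
    using i2 by (simp add: PR.prob_space)
  also have "\<dots> \<le> real (card I) / a + a"
    using second_moment[OF R I cm cb c0] a by (simp add: divide_right_mono)
  finally show "(\<integral>\<omega>. \<bar>\<Sum>i\<in>I. c (\<omega> i)\<bar> \<partial>PiM I (\<lambda>_. R)) \<le> real (card I) / a + a" .
qed

locale setting =
  fixes M :: "'w measure" and X :: "'w \<Rightarrow> real ^ 'n::finite"
    and K :: nat and mu :: "'n pmf"
  assumes M: "prob_space M" and Xm[measurable]: "X \<in> borel_measurable M"
    and Xint: "\<And>t. integrable M (\<lambda>\<omega>. X \<omega> $ t)"
    and Kpos: "0 < K" and PK: "in_PK K mu"
begin

definition "P = distr M borel X"
definition "kk t = (SOME k::nat. pmf mu t = real k / real K)"
definition "TS N = typeclass_seqs K N mu"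
definition "Pn n = PiM {..<n} (\<lambda>_. P)"
definition "Smax N x = Max ((\<lambda>s. Vf (N*K) x s) ` TS N)"

lemma kk: "pmf mu t = real (kk t) / real K"
  using PK unfolding in_PK_def kk_def by (metis (mono_tags) someI_ex)

lemma sum_kk: "(\<Sum>t\<in>UNIV. kk t) = K"
proof -
  have "(\<Sum>t\<in>UNIV. pmf mu t) = 1" by (rule sum_pmf_eq_1) auto
  then have "(\<Sum>t\<in>UNIV. real (kk t) / real K) = 1" by (simp add: kk)
  then have "(\<Sum>t\<in>UNIV. real (kk t)) = real K" using Kpos by (simp add: sum_divide_distrib[symmetric])
  then show ?thesis by (simp flip: of_nat_sum)
qed

lemma TS_iff: "s \<in> TS N \<longleftrightarrow> length s = N*K \<and> (\<forall>t. count_list s t = N * kk t)"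
proof -
  have "real (count_list s t) = real (N * K) * pmf mu t \<longleftrightarrow> count_list s t = N * kk t" for t
  proof -
    have "real (N * K) * pmf mu t = real (N * kk t)" using Kpos by (simp add: kk)
    then show ?thesis by (simp only: of_nat_eq_iff)
  qed
  then show ?thesis unfolding TS_def typeclass_seqs_def by auto
qed

lemma TS_finite: "finite (TS N)"
proof -
  have "TS N \<subseteq> {xs. set xs \<subseteq> UNIV \<and> length xs = N*K}" by (auto simp: TS_iff)
  then show ?thesis by (rule finite_subset) (rule finite_lists_length_eq, simp)
qed

lemma TS_nonempty: "TS N \<noteq> {}"
proof -
  obtain t0 :: 'n where True by simp
  have "(\<Sum>t\<in>UNIV. N * kk t) = N*K" by (simp add: sum_kk flip: sum_distrib_left)
  from fix_exists[OF _ this, of "replicate (N*K) t0"] obtain s where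
    "length s = N*K" "\<forall>t. count_list s t = N * kk t" by auto
  then have "s \<in> TS N" by (simp add: TS_iff)
  then show ?thesis by auto
qed

lemma prob_P: "prob_space P" unfolding P_def by (rule prob_space.prob_space_distr[OF M]) simp
lemma sets_P[simp, measurable_cong]: "sets P = sets borel" by (simp add: P_def)
lemma space_P[simp]: "space P = UNIV" by (simp add: P_def)

lemma int_P_comp: "integrable P (\<lambda>v. v $ t)"
  unfolding P_def by (subst integrable_distr_eq) (auto simp: Xint)

lemma int_P_habs: "integrable P habs"
  unfolding habs_def by (intro Bochner_Integration.integrable_sum integrable_abs int_P_comp)

lemma prob_Pn: "prob_space (Pn n)"
  unfolding Pn_def by (intro prob_space_PiM prob_P)

lemma sets_Pn[measurable_cong]: "sets (Pn n) = sets (PiM {..<n} (\<lambda>_. (borel :: (real^'n) measure)))"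
  unfolding Pn_def by (intro sets_PiM_cong) auto

lemma distr_Pn_comp: "i < n \<Longrightarrow> distr (Pn n) P (\<lambda>x. x i) = P"
  unfolding Pn_def by (intro distr_PiM_component prob_P) auto

lemma int_Pn_comp:
  fixes g :: "real^'n \<Rightarrow> real"
  assumes "i < n" "integrable P g"
  shows "integrable (Pn n) (\<lambda>x. g (x i))"
proof -
  have m: "(\<lambda>x. x i) \<in> measurable (Pn n) P"
    unfolding Pn_def using assms(1) by (intro measurable_component_singleton) auto
  have "integrable (distr (Pn n) P (\<lambda>x. x i)) g" using assms by (simp add: distr_Pn_comp[OF assms(1)])
  then show ?thesis using integrable_distr_eq[OF m borel_measurable_integrable[OF assms(2)]] by simp
qed

lemma integral_Pn_comp:
  fixes g :: "real^'n \<Rightarrow> real"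
  assumes "i < n" "g \<in> borel_measurable P"
  shows "(\<integral>x. g (x i) \<partial>Pn n) = (\<integral>v. g v \<partial>P)"
proof -
  have m: "(\<lambda>x. x i) \<in> measurable (Pn n) P"
    unfolding Pn_def using assms(1) by (intro measurable_component_singleton) auto
  have "(\<integral>v. g v \<partial>P) = (\<integral>v. g v \<partial>distr (Pn n) P (\<lambda>x. x i))" using assms by (simp add: distr_Pn_comp[OF assms(1)])
  also have "\<dots> = (\<integral>x. g (x i) \<partial>Pn n)" using m assms by (intro integral_distr) auto
  finally show ?thesis by simp
qed

lemma Vf_meas_Pn[measurable]: "(\<lambda>x. Vf n x s) \<in> borel_measurable (Pn n)"
  using Vf_measurable[of n s] by (simp add: measurable_cong_sets[OF sets_Pn refl])

lemma Smax_meas[measurable]: "Smax N \<in> borel_measurable (Pn (N*K))"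
  unfolding Smax_def using TS_finite by (intro borel_measurable_Max) auto

lemma habs_sum_meas: "(\<lambda>x. \<Sum>i<n. habs (x i)) \<in> borel_measurable (Pn n)"
proof -
  have "(\<lambda>x. habs (x i)) \<in> borel_measurable (Pn n)" if "i \<in> {..<n}" for i
    unfolding Pn_def by (rule measurable_compose[OF measurable_component_singleton[OF that]]) (simp add: measurable_cong_sets[OF sets_P refl])
  then show ?thesis by (intro borel_measurable_sum) auto
qed

lemma int_habs_sum: "integrable (Pn n) (\<lambda>x. \<Sum>i<n. habs (x i))"
  by (intro Bochner_Integration.integrable_sum int_Pn_comp int_P_habs) auto

lemma Smax_bound: "\<bar>Smax N x\<bar> \<le> (\<Sum>i<N*K. habs (x i)) / real (N*K)"
proof -
  obtain s where s: "s \<in> TS N" "Smax N x = Vf (N*K) x s"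
    unfolding Smax_def using TS_finite TS_nonempty
    by (metis (no_types, lifting) Max_in finite_imageI image_iff image_is_empty)
  show ?thesis using s(2) Vf_bound[of "N*K" x s] by (simp only:)
qed

lemma int_Smax: "integrable (Pn (N*K)) (Smax N)"
  by (rule Bochner_Integration.integrable_bound[OF integrable_divide[OF int_habs_sum[of "N*K"], of "real (N*K)"]])
     (auto intro!: AE_I2 order.trans[OF Smax_bound] simp: habs_nonneg sum_nonneg)

definition "lst N = (SOME l. set l = TS N \<and> distinct l)"
definition "tau N x = foldl (\<lambda>b s. if Vf (N*K) x b < Vf (N*K) x s then s else b) (hd (lst N)) (lst N)"

lemma lst: "set (lst N) = TS N"
proof -
  have "\<exists>l. set l = TS N \<and> distinct l" using TS_finite finite_distinct_list by blast
  then show ?thesis unfolding lst_def by (metis (mono_tags, lifting) someI_ex)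
qed

lemma tau: "tau N x \<in> TS N" "Vf (N*K) x (tau N x) = Smax N x"
proof -
  have ne: "lst N \<noteq> []" using lst[of N] TS_nonempty[of N] by (metis set_empty)
  then have hd: "hd (lst N) \<in> TS N" using lst by (metis hd_in_set)
  note fa = foldl_argmax[of "Vf (N*K) x" "hd (lst N)" "lst N"]
  have ins: "insert (hd (lst N)) (set (lst N)) = TS N" using hd lst by auto
  show t: "tau N x \<in> TS N" using fa ins unfolding tau_def by simp
  have "\<forall>s\<in>TS N. Vf (N*K) x s \<le> Vf (N*K) x (tau N x)" using fa ins unfolding tau_def by simp
  then show "Vf (N*K) x (tau N x) = Smax N x" unfolding Smax_def using t TS_finite
    by (intro antisym Max_ge Max.boundedI) auto
qed

lemma tau_meas[measurable]: "tau N \<in> measurable (Pn (N*K)) (count_space UNIV)"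
  unfolding tau_def
  by (rule foldl_argmax_measurable[where g="\<lambda>x s. Vf (N*K) x s"]) auto


lemma count_card: "count_list xs t = card {i. i < length xs \<and> xs!i = t}"
  unfolding count_list_eq_length_filter length_filter_conv_card by metis

lemma xz_meas[measurable]: "(\<lambda>p::((real^'n) \<times> 'n). fst p $ snd p) \<in> borel_measurable (borel \<Otimes>\<^sub>M count_space UNIV)"
proof (rule measurable_compose_countable'[where f="\<lambda>t p. fst p $ t" and g=snd and I=UNIV])
  fix i :: 'n
  have "(\<lambda>v::real^'n. v $ i) \<in> borel_measurable borel" by simp
  then show "(\<lambda>p::((real^'n) \<times> 'n). fst p $ i) \<in> borel_measurable (borel \<Otimes>\<^sub>M count_space UNIV)"
    by (rule measurable_compose[OF measurable_fst])
qed simp_all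


lemma cpl_fst_meas:
  assumes "coupling P mu Q"
  shows "fst \<in> measurable Q borel"
proof -
  have e: "sets Q = sets (borel \<Otimes>\<^sub>M count_space UNIV)" using assms unfolding coupling_def by simp
  show ?thesis unfolding measurable_cong_sets[OF e refl] by (rule measurable_fst)
qed

lemma cpl_sets: "coupling P mu Q \<Longrightarrow> sets Q = sets (borel \<Otimes>\<^sub>M count_space UNIV)"
  unfolding coupling_def by simp

lemma cpl_fst:
  fixes g :: "real^'n \<Rightarrow> real"
  assumes c: "coupling P mu Q" and g: "integrable P g"
  shows "integrable Q (\<lambda>p. g (fst p))" "(\<integral>p. g (fst p) \<partial>Q) = (\<integral>v. g v \<partial>P)"
proof -
  have fm: "fst \<in> measurable Q borel" by (rule cpl_fst_meas[OF c])
  have gm: "g \<in> borel_measurable borel"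
    using borel_measurable_integrable[OF g] by (simp add: measurable_cong_sets[OF sets_P refl])
  have d: "distr Q borel fst = P" using c unfolding coupling_def by simp
  show "integrable Q (\<lambda>p. g (fst p))"
    using integrable_distr_eq[OF fm gm] g d by simp
  show "(\<integral>p. g (fst p) \<partial>Q) = (\<integral>v. g v \<partial>P)"
    using integral_distr[OF fm gm] d by simp
qed


lemma cpl_xz:
  assumes c: "coupling P mu Q"
  shows "integrable Q (\<lambda>p. fst p $ snd p)" "(\<integral>p. fst p $ snd p \<partial>Q) \<le> (\<integral>v. habs v \<partial>P)"
proof -
  have m: "(\<lambda>p. fst p $ snd p) \<in> borel_measurable Q"
    unfolding measurable_cong_sets[OF cpl_sets[OF c] refl] by (rule xz_meas)
  note h = cpl_fst[OF c int_P_habs]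
  show i: "integrable Q (\<lambda>p. fst p $ snd p)"
    by (rule Bochner_Integration.integrable_bound[OF h(1) m])
       (simp add: habs_ge abs_of_nonneg[OF habs_nonneg])
  have "(\<integral>p. fst p $ snd p \<partial>Q) \<le> (\<integral>p. habs (fst p) \<partial>Q)"
    by (rule integral_mono[OF i h(1)]) (metis abs_le_D1 habs_ge)
  then show "(\<integral>p. fst p $ snd p \<partial>Q) \<le> (\<integral>v. habs v \<partial>P)" using h(2) by simp
qed

lemma cpl_snd:
  assumes c: "coupling P mu Q"
  shows "(\<integral>p. indicator {t} (snd p) \<partial>Q) = pmf mu t"
proof -
  have sm: "snd \<in> measurable Q (count_space UNIV)"
    unfolding measurable_cong_sets[OF cpl_sets[OF c] refl] by (rule measurable_snd)
  have d: "distr Q (count_space UNIV) snd = measure_pmf mu" using c unfolding coupling_def by simp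
  have "(\<integral>p. indicator {t} (snd p) \<partial>Q) = (\<integral>s. (indicator {t} (s::'n) :: real) \<partial>distr Q (count_space UNIV) snd)"
    by (rule integral_distr[OF sm, where f="indicator {t} :: 'n \<Rightarrow> real", symmetric]) simp
  also have "\<dots> = pmf mu t" unfolding d by (simp add: measure_pmf_single)
  finally show ?thesis .
qed

lemma fernique_bdd: "bdd_above ((\<lambda>Q. \<integral>p. fst p $ snd p \<partial>Q) ` {Q. coupling P mu Q})"
  using cpl_xz(2) by (intro bdd_aboveI[of _ "\<integral>v. habs v \<partial>P"]) auto

lemma fernique_ge: "coupling P mu Q \<Longrightarrow> (\<integral>p. fst p $ snd p \<partial>Q) \<le> fernique P mu"
  unfolding fernique_def by (rule cSUP_upper[OF _ fernique_bdd]) auto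


lemma comp_meas_any[measurable]: "(\<lambda>x. x i) \<in> measurable (Pn n) P"
proof (cases "i < n")
  case True
  then show ?thesis unfolding Pn_def by (intro measurable_component_singleton) auto
next
  case False
  have "(\<lambda>x. x i) \<in> measurable (Pn n) P \<longleftrightarrow> (\<lambda>x. undefined) \<in> measurable (Pn n) P"
    using False by (intro measurable_cong) (auto simp: Pn_def space_PiM PiE_def extensional_def)
  then show ?thesis by simp
qed

lemma comp_meas_borel[measurable]: "(\<lambda>x. x i) \<in> borel_measurable (Pn n) "
  using comp_meas_any[of i n] unfolding measurable_cong_sets[OF refl sets_P] .

lemma comp_nth_meas: "(\<lambda>x. x i $ j) \<in> borel_measurable (Pn n)"
  by (rule measurable_compose[OF comp_meas_borel]) simp

lemma comp_tau_meas: "(\<lambda>x. x i $ (tau N x ! i)) \<in> borel_measurable (Pn (N*K))"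
  by (rule measurable_compose_countable'[where f="\<lambda>s x. x i $ (s ! i)" and g="tau N" and I=UNIV])
     (auto intro: comp_nth_meas)

lemma int_comp_tau: "i < N*K \<Longrightarrow> integrable (Pn (N*K)) (\<lambda>x. x i $ (tau N x ! i))"
  by (rule Bochner_Integration.integrable_bound[OF int_Pn_comp[of i "N*K" habs, OF _ int_P_habs] comp_tau_meas])
     (auto intro!: AE_I2 simp: habs_ge abs_of_nonneg[OF habs_nonneg])


lemma upper_cpl:
  assumes N: "0 < N"
  shows "\<exists>Q. coupling P mu Q \<and> (\<integral>p. fst p $ snd p \<partial>Q) = (\<integral>x. Smax N x \<partial>Pn (N*K))"
proof -
  have n: "0 < N*K" using N Kpos by simp
  have ne: "{..<N*K} \<noteq> {}" using n lessThan_iff by blast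
  define U where "U = measure_pmf (pmf_of_set {..<N*K})"
  interpret pp: pair_prob_space U "Pn (N*K)"
    unfolding pair_prob_space_def pair_sigma_finite_def U_def
    by (simp add: prob_space_imp_sigma_finite prob_Pn prob_space_measure_pmf)
  define g where "g = (\<lambda>p::nat \<times> (nat \<Rightarrow> real^'n). (snd p (fst p), tau N (snd p) ! fst p))"
  have gm: "g \<in> measurable (U \<Otimes>\<^sub>M Pn (N*K)) (borel \<Otimes>\<^sub>M count_space UNIV)"
  proof -
    have e: "sets (U \<Otimes>\<^sub>M Pn (N*K)) = sets (count_space UNIV \<Otimes>\<^sub>M Pn (N*K))"
      unfolding U_def by (rule sets_pair_measure_cong[OF sets_measure_pmf_count_space refl])
    have "g \<in> measurable (count_space UNIV \<Otimes>\<^sub>M Pn (N*K)) (borel \<Otimes>\<^sub>M count_space UNIV)"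
    proof (rule measurable_pair_measure_countable1)
      fix i :: nat
      have "(\<lambda>x. tau N x ! i) \<in> measurable (Pn (N*K)) (count_space UNIV)"
        by (rule measurable_compose[OF tau_meas]) simp
      then show "(\<lambda>x. g (i, x)) \<in> measurable (Pn (N*K)) (borel \<Otimes>\<^sub>M count_space UNIV)"
        unfolding g_def by (intro measurable_Pair) (simp_all add: comp_meas_borel)
    qed simp
    then show ?thesis unfolding measurable_cong_sets[OF e refl] .
  qed
  define Q where "Q = distr (U \<Otimes>\<^sub>M Pn (N*K)) (borel \<Otimes>\<^sub>M count_space UNIV) g"
  have fstg: "distr (U \<Otimes>\<^sub>M Pn (N*K)) borel (\<lambda>p. snd p (fst p)) = P"
  proof (rule measure_eqI)
    show "sets (distr (U \<Otimes>\<^sub>M Pn (N*K)) borel (\<lambda>p. snd p (fst p))) = sets P" by simp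
    fix A assume "A \<in> sets (distr (U \<Otimes>\<^sub>M Pn (N*K)) borel (\<lambda>p. snd p (fst p)))"
    then have A: "A \<in> sets borel" by simp
    have m: "(\<lambda>p. snd p (fst p)) \<in> borel_measurable (U \<Otimes>\<^sub>M Pn (N*K))"
      using measurable_compose[OF gm measurable_fst] by (simp add: g_def comp_def)
    have "emeasure (distr (U \<Otimes>\<^sub>M Pn (N*K)) borel (\<lambda>p. snd p (fst p))) A
       = emeasure (U \<Otimes>\<^sub>M Pn (N*K)) ((\<lambda>p. snd p (fst p)) -` A \<inter> space (U \<Otimes>\<^sub>M Pn (N*K)))"
      by (rule emeasure_distr[OF m A])
    also have "\<dots> = (\<integral>\<^sup>+i. emeasure (Pn (N*K)) (Pair i -` ((\<lambda>p. snd p (fst p)) -` A \<inter> space (U \<Otimes>\<^sub>M Pn (N*K)))) \<partial>U)"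
      by (rule pp.M2.emeasure_pair_measure_alt) (rule measurable_sets[OF m A])
    also have "\<dots> = (\<integral>\<^sup>+i. emeasure P A \<partial>U)"
    proof (rule nn_integral_cong_AE)
      have "AE i in U. i < N*K" unfolding U_def using ne by (simp add: AE_measure_pmf_iff)
      then show "AE i in U. emeasure (Pn (N*K)) (Pair i -` ((\<lambda>p. snd p (fst p)) -` A \<inter> space (U \<Otimes>\<^sub>M Pn (N*K)))) = emeasure P A"
      proof eventually_elim
        case (elim i)
        have mi: "(\<lambda>x. x i) \<in> measurable (Pn (N*K)) P" by (rule comp_meas_any)
        have "Pair i -` ((\<lambda>p. snd p (fst p)) -` A \<inter> space (U \<Otimes>\<^sub>M Pn (N*K))) = (\<lambda>x. x i) -` A \<inter> space (Pn (N*K))"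
          by (auto simp: space_pair_measure U_def)
        also have "emeasure (Pn (N*K)) \<dots> = emeasure (distr (Pn (N*K)) P (\<lambda>x. x i)) A"
          using A by (intro emeasure_distr[symmetric] mi) simp
        also have "\<dots> = emeasure P A" using distr_Pn_comp[OF elim] by simp
        finally show ?case .
      qed
    qed
    also have "\<dots> = emeasure P A" using pp.M1.emeasure_space_1 by simp
    finally show "emeasure (distr (U \<Otimes>\<^sub>M Pn (N*K)) borel (\<lambda>p. snd p (fst p))) A = emeasure P A" .
  qed
  have cQ: "coupling P mu Q"
    unfolding coupling_def
  proof (intro conjI)
    show "prob_space Q" unfolding Q_def by (rule pp.prob_space_distr[OF gm])
    show "sets Q = sets (borel \<Otimes>\<^sub>M count_space UNIV)" by (simp add: Q_def)
    show "distr Q borel fst = P"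
      unfolding Q_def using fstg by (subst distr_distr[OF measurable_fst gm]) (simp add: comp_def g_def)
    show "distr Q (count_space UNIV) snd = measure_pmf mu"
    proof (rule measure_eqI_countable[where A=UNIV])
      show "sets (distr Q (count_space UNIV) snd) = Pow UNIV" by simp
      show "sets (measure_pmf mu) = Pow UNIV" by simp
      show "countable (UNIV :: 'n set)" by simp
      fix t :: 'n
      have hm: "(\<lambda>p. tau N (snd p) ! fst p) \<in> measurable (U \<Otimes>\<^sub>M Pn (N*K)) (count_space UNIV)"
        using measurable_compose[OF gm measurable_snd] by (simp add: g_def comp_def)
      have S: "(\<lambda>p. tau N (snd p) ! fst p) -` {t} \<inter> space (U \<Otimes>\<^sub>M Pn (N*K)) \<in> sets (U \<Otimes>\<^sub>M Pn (N*K))"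
        by (rule measurable_sets[OF hm]) simp
      have "emeasure (distr Q (count_space UNIV) snd) {t} = emeasure (distr (U \<Otimes>\<^sub>M Pn (N*K)) (count_space UNIV) (\<lambda>p. tau N (snd p) ! fst p)) {t}"
        unfolding Q_def by (subst distr_distr[OF measurable_snd gm]) (simp add: comp_def g_def)
      also have "\<dots> = emeasure (U \<Otimes>\<^sub>M Pn (N*K)) ((\<lambda>p. tau N (snd p) ! fst p) -` {t} \<inter> space (U \<Otimes>\<^sub>M Pn (N*K)))"
        by (rule emeasure_distr[OF hm]) simp
      also have "\<dots> = (\<integral>\<^sup>+x. emeasure U ((\<lambda>i. (i, x)) -` ((\<lambda>p. tau N (snd p) ! fst p) -` {t} \<inter> space (U \<Otimes>\<^sub>M Pn (N*K)))) \<partial>Pn (N*K))"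
        by (rule pp.emeasure_pair_measure_alt2[OF S])
      also have "\<dots> = (\<integral>\<^sup>+x. ennreal (pmf mu t) \<partial>Pn (N*K))"
      proof (rule nn_integral_cong)
        fix x assume x: "x \<in> space (Pn (N*K))"
        have e1: "(\<lambda>i. (i, x)) -` ((\<lambda>p. tau N (snd p) ! fst p) -` {t} \<inter> space (U \<Otimes>\<^sub>M Pn (N*K))) = {i. tau N x ! i = t}"
          using x by (auto simp: space_pair_measure U_def)
        have "{..<N*K} \<inter> {i. tau N x ! i = t} = {i. i < length (tau N x) \<and> tau N x ! i = t}"
          using tau(1)[of N x] by (auto simp: TS_iff)
        then have c: "card ({..<N*K} \<inter> {i. tau N x ! i = t}) = N * kk t"
          using tau(1)[of N x] count_card[of "tau N x" t] by (simp add: TS_iff)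
        have "emeasure U {i. tau N x ! i = t} = ennreal (real (N * kk t) / real (N*K))"
          unfolding U_def emeasure_pmf_of_set[OF ne finite_lessThan] c by (simp only: card_lessThan)
        also have "real (N * kk t) / real (N*K) = pmf mu t" using N by (simp add: kk)
        finally show "emeasure U ((\<lambda>i. (i, x)) -` ((\<lambda>p. tau N (snd p) ! fst p) -` {t} \<inter> space (U \<Otimes>\<^sub>M Pn (N*K)))) = ennreal (pmf mu t)"
          unfolding e1 .
      qed
      also have "\<dots> = ennreal (pmf mu t)" using prob_space.emeasure_space_1[OF prob_Pn, of "N*K"] by simp
      also have "\<dots> = emeasure (measure_pmf mu) {t}" by (simp add: emeasure_pmf_single)
      finally show "emeasure (distr Q (count_space UNIV) snd) {t} = emeasure (measure_pmf mu) {t}" .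
    qed
  qed
  have intg: "integrable (U \<Otimes>\<^sub>M Pn (N*K)) (\<lambda>p. snd p (fst p) $ (tau N (snd p) ! fst p))"
    using cpl_xz(1)[OF cQ] unfolding Q_def by (subst (asm) integrable_distr_eq[OF gm xz_meas]) (simp add: g_def)
  have "(\<integral>p. fst p $ snd p \<partial>Q) = (\<integral>p. snd p (fst p) $ (tau N (snd p) ! fst p) \<partial>(U \<Otimes>\<^sub>M Pn (N*K)))"
    unfolding Q_def by (subst integral_distr[OF gm xz_meas]) (simp add: g_def)
  also have "\<dots> = (\<integral>i. (\<integral>x. x i $ (tau N x ! i) \<partial>Pn (N*K)) \<partial>U)"
    using pp.integral_fst'[OF intg] by simp
  also have "\<dots> = (\<Sum>i<N*K. (\<integral>x. x i $ (tau N x ! i) \<partial>Pn (N*K))) / real (N*K)"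
    unfolding U_def integral_pmf_of_set[OF ne finite_lessThan] by simp
  also have "\<dots> = (\<integral>x. (\<Sum>i<N*K. x i $ (tau N x ! i)) \<partial>Pn (N*K)) / real (N*K)"
    by (subst Bochner_Integration.integral_sum) (auto intro: int_comp_tau)
  also have "\<dots> = (\<integral>x. Vf (N*K) x (tau N x) \<partial>Pn (N*K))"
    unfolding Vf_def by simp
  also have "\<dots> = (\<integral>x. Smax N x \<partial>Pn (N*K))" using tau(2) by simp
  finally show ?thesis using cQ by auto
qed

lemma upper:
  assumes N: "0 < N"
  shows "(\<integral>x. Smax N x \<partial>Pn (N*K)) \<le> fernique P mu"
  using upper_cpl[OF N] fernique_ge by metis

lemma cpl_exists: "{Q. coupling P mu Q} \<noteq> {}"
  using upper_cpl[of 1] by auto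


lemma Smax_lower:
  assumes z: "length z = N*K" and L: "0 \<le> L"
  shows "Vf (N*K) x z - 2 * (L * (\<Sum>t\<in>UNIV. \<bar>real (count_list z t) - real (N * kk t)\<bar>) + (\<Sum>i<N*K. max 0 (habs (x i) - L))) / real (N*K) \<le> Smax N x"
proof -
  have sc: "(\<Sum>t\<in>UNIV. N * kk t) = N*K" by (simp add: sum_kk flip: sum_distrib_left)
  obtain s where s: "length s = N*K" "\<forall>t. count_list s t = N * kk t"
    and cd: "card {i. i<N*K \<and> s!i \<noteq> z!i} \<le> (\<Sum>t\<in>UNIV. dnat (count_list z t) (N * kk t))"
    using fix_exists[OF z sc] by blast
  have sT: "s \<in> TS N" using s by (simp add: TS_iff)
  have le1: "Vf (N*K) x s \<le> Smax N x" unfolding Smax_def using sT TS_finite by (intro Max_ge) auto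
  define D where "D = {i. i<N*K \<and> s!i \<noteq> z!i}"
  define B where "B = (\<Sum>t\<in>UNIV. \<bar>real (count_list z t) - real (N * kk t)\<bar>)"
  define C where "C = (\<Sum>i<N*K. max 0 (habs (x i) - L))"
  have dn: "real (dnat a b) = \<bar>real a - real b\<bar>" for a b by (simp add: dnat_def of_nat_diff)
  have "real (card D) \<le> real (\<Sum>t\<in>UNIV. dnat (count_list z t) (N * kk t))"
    using cd unfolding D_def by (rule of_nat_mono)
  also have "\<dots> = B" unfolding B_def of_nat_sum dn ..
  finally have cdr: "real (card D) \<le> B" .
  have trm: "x i $ (z!i) - x i $ (s!i) \<le> 2*L*(if i\<in>D then 1 else 0) + 2 * max 0 (habs (x i) - L)"
    if "i < N*K" for i
  proof (cases "i \<in> D")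
    case True
    have "x i $ (z!i) - x i $ (s!i) \<le> 2 * habs (x i)"
      using habs_ge[of "x i" "z!i"] habs_ge[of "x i" "s!i"] by linarith
    also have "\<dots> \<le> 2*L + 2*max 0 (habs (x i) - L)" by (simp add: max_def)
    finally show ?thesis using True by simp
  next
    case False
    then have "s!i = z!i" using that by (simp add: D_def)
    then show ?thesis using L by simp
  qed
  have cardD: "(\<Sum>i<N*K. (if i\<in>D then 1 else 0::real)) = real (card D)"
  proof -
    have "(\<Sum>i<N*K. (if i\<in>D then 1 else 0::real)) = (\<Sum>i\<in>{i\<in>{..<N*K}. i \<in> D}. 1)"
      by (rule sum.inter_filter[symmetric]) simp
    also have "{i\<in>{..<N*K}. i \<in> D} = D" by (auto simp: D_def)
    finally show ?thesis by simp
  qed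
  have "(\<Sum>i<N*K. x i $ (z!i)) - (\<Sum>i<N*K. x i $ (s!i)) \<le> (\<Sum>i<N*K. 2*L*(if i\<in>D then 1 else 0) + 2 * max 0 (habs (x i) - L))"
    unfolding sum_subtractf[symmetric] by (rule sum_mono) (simp add: trm)
  also have "\<dots> = 2*L*real (card D) + 2*C"
    unfolding sum.distrib C_def sum_distrib_left[symmetric] cardD[symmetric] by (simp add: sum_distrib_left)
  also have "\<dots> \<le> 2 * (L * B + C)" using cdr L by (simp add: mult_left_mono)
  finally have "((\<Sum>i<N*K. x i $ (z!i)) - (\<Sum>i<N*K. x i $ (s!i))) / real (N*K) \<le> 2 * (L * B + C) / real (N*K)"
    by (rule divide_right_mono) simp
  then have "Vf (N*K) x z - 2 * (L * B + C) / real (N*K) \<le> Vf (N*K) x s"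
    unfolding Vf_def by (simp add: diff_divide_distrib)
  then show ?thesis using le1 unfolding B_def C_def by simp
qed


lemma count_map_upt: "real (count_list (map f [0..<n]) t) = (\<Sum>i<n. indicator {t} (f i) :: real)"
proof -
  have c: "count_list (map f [0..<n]) t = card {i. i < n \<and> f i = t}"
    unfolding count_card by (intro arg_cong[where f=card]) auto
  have "(\<Sum>i<n. indicator {t} (f i) :: real) = (\<Sum>i<n. indicator (f -` {t}) i)"
    by (intro sum.cong) (auto simp: indicator_def)
  also have "\<dots> = real (card ({..<n} \<inter> f -` {t}))"
    unfolding indicator_def sum.If_cases[OF finite_lessThan] by (simp add: vimage_def)
  also have "{..<n} \<inter> f -` {t} = {i. i < n \<and> f i = t}" by auto
  finally show ?thesis unfolding c by simp
qed

lemma lower_bound: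
  assumes c: "coupling P mu Q" and N: "0 < N" and L: "0 \<le> L" and a: "0 < a"
  shows "(\<integral>p. fst p $ snd p \<partial>Q) - 2 * L * real CARD('n) / a - 2 * L * real CARD('n) * a / real (N*K)
           - 2 * (\<integral>v. max 0 (habs v - L) \<partial>P) \<le> (\<integral>x. Smax N x \<partial>Pn (N*K))"
proof -
  define I where "I = {..<N*K}"
  define Qn where "Qn = PiM I (\<lambda>_. Q)"
  have n: "0 < real (N*K)" using N Kpos by simp
  have cardI: "card I = N*K" by (simp add: I_def)
  have pQ: "prob_space Q" using c unfolding coupling_def by simp
  interpret PQ: prob_space Qn unfolding Qn_def by (intro prob_space_PiM pQ)
  have fQ: "fst \<in> measurable Q P" using cpl_fst_meas[OF c] unfolding measurable_cong_sets[OF refl sets_P] .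
  have dQP: "distr Q P fst = P"
  proof -
    have "distr Q P fst = distr Q borel fst" by (rule distr_cong) auto
    also have "\<dots> = P" using c unfolding coupling_def by simp
    finally show ?thesis .
  qed
  have cm1: "(\<lambda>\<omega>. fst (\<omega> i)) \<in> measurable Qn P" if "i \<in> I" for i
    unfolding Qn_def by (rule measurable_compose[OF measurable_component_singleton[OF that] fQ])
  have cm: "compose I fst \<in> measurable Qn (Pn (N*K))"
    unfolding Pn_def compose_def I_def[symmetric]
    by (rule measurable_restrict) (rule cm1)
  have dist: "distr Qn (Pn (N*K)) (compose I fst) = Pn (N*K)"
  proof -
    have "distr Qn (Pn (N*K)) (compose I fst) = PiM I (\<lambda>i. distr Q P fst)"
      unfolding Qn_def Pn_def I_def
      by (intro distr_PiM_finite_prob_space product_prob_spaceI pQ prob_P fQ) auto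
    also have "\<dots> = Pn (N*K)" unfolding dQP Pn_def I_def ..
    finally show ?thesis .
  qed
  have "integrable (distr Qn (Pn (N*K)) (compose I fst)) (Smax N)" using int_Smax[of N] dist by simp
  then have intS: "integrable Qn (\<lambda>\<omega>. Smax N (compose I fst \<omega>))"
    using integrable_distr_eq[OF cm Smax_meas] by simp
  have eqS: "(\<integral>x. Smax N x \<partial>Pn (N*K)) = (\<integral>\<omega>. Smax N (compose I fst \<omega>) \<partial>Qn)"
    using integral_distr[OF cm Smax_meas] dist by simp
  define ct where "ct t p = indicator {t} (snd p) - pmf mu t" for t and p :: "(real^'n) \<times> 'n"
  define m where "m v = max 0 (habs v - L)" for v :: "real^'n"
  define A where "A \<omega> = (\<Sum>i\<in>I. fst (\<omega> i) $ snd (\<omega> i))" for \<omega> :: "nat \<Rightarrow> (real^'n) \<times> 'n"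
  define B where "B \<omega> = (\<Sum>t\<in>UNIV. \<bar>\<Sum>i\<in>I. ct t (\<omega> i)\<bar>)" for \<omega> :: "nat \<Rightarrow> (real^'n) \<times> 'n"
  define C where "C \<omega> = (\<Sum>i\<in>I. m (fst (\<omega> i)))" for \<omega> :: "nat \<Rightarrow> (real^'n) \<times> 'n"
  define G where "G \<omega> = A \<omega> / real (N*K) - 2 * (L * B \<omega> + C \<omega>) / real (N*K)" for \<omega>
  have ptw: "G \<omega> \<le> Smax N (compose I fst \<omega>)" for \<omega>
  proof -
    define z where "z = map (\<lambda>i. snd (\<omega> i)) [0..<N*K]"
    have zl: "length z = N*K" by (simp add: z_def)
    have cx: "compose I fst \<omega> i = fst (\<omega> i)" if "i < N*K" for i using that by (simp add: compose_def I_def)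
    have "(\<Sum>i<N*K. compose I fst \<omega> i $ (z!i)) = A \<omega>"
      unfolding A_def I_def z_def by (rule sum.cong) (simp_all add: cx[unfolded I_def])
    then have e1: "Vf (N*K) (compose I fst \<omega>) z = A \<omega> / real (N*K)"
      by (simp add: Vf_def)
    have e2: "(\<Sum>t\<in>UNIV. \<bar>real (count_list z t) - real (N * kk t)\<bar>) = B \<omega>"
      unfolding B_def
    proof (rule sum.cong[OF refl])
      fix t
      have "real (count_list z t) = (\<Sum>i\<in>I. indicator {t} (snd (\<omega> i)))" unfolding z_def I_def by (rule count_map_upt)
      moreover have "real (N * kk t) = (\<Sum>i\<in>I. pmf mu t)" using Kpos by (simp add: I_def kk)
      ultimately show "\<bar>real (count_list z t) - real (N * kk t)\<bar> = \<bar>\<Sum>i\<in>I. ct t (\<omega> i)\<bar>"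
        by (simp add: ct_def sum_subtractf)
    qed
    have e3: "(\<Sum>i<N*K. max 0 (habs (compose I fst \<omega> i) - L)) = C \<omega>"
      unfolding I_def m_def C_def by (rule sum.cong) (simp_all add: cx[unfolded I_def])
    show ?thesis using Smax_lower[OF zl L, of "compose I fst \<omega>"] unfolding e1 e2 e3 G_def .
  qed
  interpret PQ1: prob_space Q by (rule pQ)
  have finI: "finite I" by (simp add: I_def)
  have xzQ: "integrable Q (\<lambda>p. fst p $ snd p)" by (rule cpl_xz(1)[OF c])
  have mP: "integrable P m"
  proof (rule Bochner_Integration.integrable_bound[OF int_P_habs])
    show "m \<in> borel_measurable P" unfolding m_def measurable_cong_sets[OF sets_P refl] by measurable
    show "AE x in P. norm (m x) \<le> norm (habs x)"
      using L by (intro AE_I2) (auto simp: m_def habs_nonneg abs_of_nonneg[OF habs_nonneg])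
  qed
  note mQ = cpl_fst[OF c mP]
  have sQ: "snd \<in> measurable Q (count_space UNIV)"
    unfolding measurable_cong_sets[OF cpl_sets[OF c] refl] by (rule measurable_snd)
  have ctm: "ct t \<in> borel_measurable Q" for t
  proof -
    have "(\<lambda>p. indicator {t} (snd p) :: real) \<in> borel_measurable Q"
      by (rule measurable_compose[OF sQ]) simp
    then show ?thesis unfolding ct_def by (intro borel_measurable_diff) simp_all
  qed
  have ctb: "\<bar>ct t p\<bar> \<le> 1" for t p
    unfolding ct_def using pmf_le_1[of mu t] pmf_nonneg[of mu t] by (auto simp: indicator_def)
  have ct0: "(\<integral>p. ct t p \<partial>Q) = 0" for t
  proof -
    have ii: "integrable Q (\<lambda>p. indicator {t} (snd p) :: real)"
      by (rule PQ1.integrable_const_bound[where B=1]) (auto intro!: measurable_compose[OF sQ] simp: indicator_def)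
    have "(\<integral>p. ct t p \<partial>Q) = (\<integral>p. indicator {t} (snd p) \<partial>Q) - (\<integral>p. pmf mu t \<partial>Q)"
      unfolding ct_def by (rule Bochner_Integration.integral_diff[OF ii]) simp
    then show ?thesis using cpl_snd[OF c, of t] by (simp add: PQ1.prob_space)
  qed
  have iA: "integrable Qn A"
    unfolding A_def Qn_def by (intro Bochner_Integration.integrable_sum PiM_comp_int(1)[OF pQ _ xzQ])
  have IA: "(\<integral>\<omega>. A \<omega> \<partial>Qn) = real (N*K) * (\<integral>p. fst p $ snd p \<partial>Q)"
  proof -
    have "(\<integral>\<omega>. A \<omega> \<partial>Qn) = (\<Sum>i\<in>I. \<integral>\<omega>. fst (\<omega> i) $ snd (\<omega> i) \<partial>Qn)"
      unfolding A_def Qn_def by (intro Bochner_Integration.integral_sum PiM_comp_int(1)[OF pQ _ xzQ])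
    also have "\<dots> = (\<Sum>i\<in>I. \<integral>p. fst p $ snd p \<partial>Q)"
      unfolding Qn_def by (intro sum.cong refl PiM_comp_int(2)[OF pQ _ xzQ])
    finally show ?thesis by (simp add: cardI)
  qed
  have iB: "integrable Qn B"
    unfolding B_def Qn_def by (intro Bochner_Integration.integrable_sum abs_moment(1)[OF pQ finI ctm ctb ct0 a])
  have IB: "(\<integral>\<omega>. B \<omega> \<partial>Qn) \<le> real CARD('n) * (real (N*K) / a + a)"
  proof -
    have "(\<integral>\<omega>. B \<omega> \<partial>Qn) = (\<Sum>t\<in>UNIV. \<integral>\<omega>. \<bar>\<Sum>i\<in>I. ct t (\<omega> i)\<bar> \<partial>Qn)"
      unfolding B_def Qn_def by (intro Bochner_Integration.integral_sum abs_moment(1)[OF pQ finI ctm ctb ct0 a])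
    also have "\<dots> \<le> (\<Sum>t\<in>(UNIV::'n set). real (N*K) / a + a)"
      unfolding Qn_def by (intro sum_mono order.trans[OF abs_moment(2)[OF pQ finI ctm ctb ct0 a]]) (simp add: cardI)
    finally show ?thesis by simp
  qed
  have iC: "integrable Qn C"
    unfolding C_def Qn_def by (intro Bochner_Integration.integrable_sum PiM_comp_int(1)[OF pQ _ mQ(1)])
  have IC: "(\<integral>\<omega>. C \<omega> \<partial>Qn) = real (N*K) * (\<integral>v. m v \<partial>P)"
  proof -
    have "(\<integral>\<omega>. C \<omega> \<partial>Qn) = (\<Sum>i\<in>I. \<integral>\<omega>. m (fst (\<omega> i)) \<partial>Qn)"
      unfolding C_def Qn_def by (intro Bochner_Integration.integral_sum PiM_comp_int(1)[OF pQ _ mQ(1)])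
    also have "\<dots> = (\<Sum>i\<in>I. \<integral>v. m v \<partial>P)"
      unfolding Qn_def using PiM_comp_int(2)[OF pQ _ mQ(1)] mQ(2) by (intro sum.cong refl) simp
    finally show ?thesis by (simp add: cardI)
  qed
  have intG: "integrable Qn G"
    unfolding G_def using iA iB iC by simp
  have IG: "(\<integral>\<omega>. G \<omega> \<partial>Qn) = (\<integral>\<omega>. A \<omega> \<partial>Qn) / real (N*K) - 2 * (L * (\<integral>\<omega>. B \<omega> \<partial>Qn) + (\<integral>\<omega>. C \<omega> \<partial>Qn)) / real (N*K)"
    unfolding G_def using iA iB iC by simp
  define E where "E = (\<integral>p. fst p $ snd p \<partial>Q)"
  define Mv where "Mv = (\<integral>v. m v \<partial>P)"
  define nn where "nn = real (N*K)"
  define cc where "cc = real CARD('n)"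
  have nn: "0 < nn" using n by (simp add: nn_def)
  have "2 * (L * (\<integral>\<omega>. B \<omega> \<partial>Qn) + nn * Mv) / nn \<le> 2 * (L * (cc * (nn / a + a)) + nn * Mv) / nn"
    using IB L nn by (intro divide_right_mono mult_left_mono add_right_mono) (auto simp: cc_def nn_def)
  also have "\<dots> = 2 * L * cc / a + 2 * L * cc * a / nn + 2 * Mv"
    using nn a by (simp add: field_simps)
  finally have key: "2 * (L * (\<integral>\<omega>. B \<omega> \<partial>Qn) + nn * Mv) / nn \<le> 2 * L * cc / a + 2 * L * cc * a / nn + 2 * Mv" .
  have IA': "(\<integral>\<omega>. A \<omega> \<partial>Qn) = nn * E" using IA by (simp add: nn_def E_def)
  have IC': "(\<integral>\<omega>. C \<omega> \<partial>Qn) = nn * Mv" using IC by (simp add: nn_def Mv_def)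
  have IG': "(\<integral>\<omega>. G \<omega> \<partial>Qn) = E - 2 * (L * (\<integral>\<omega>. B \<omega> \<partial>Qn) + nn * Mv) / nn"
    unfolding IG IA' IC' nn_def[symmetric] using nn by simp
  have "E - 2 * L * cc / a - 2 * L * cc * a / nn - 2 * Mv \<le> (\<integral>\<omega>. G \<omega> \<partial>Qn)"
    unfolding IG' using key by linarith
  also have "\<dots> \<le> (\<integral>\<omega>. Smax N (compose I fst \<omega>) \<partial>Qn)"
    by (rule integral_mono[OF intG intS ptw])
  finally show ?thesis unfolding eqS E_def Mv_def m_def nn_def cc_def .
qed


lemma tail: "(\<lambda>m::nat. \<integral>v. max 0 (habs v - real m) \<partial>P) \<longlonglongrightarrow> 0"
proof -
  have "(\<lambda>m::nat. \<integral>v. max 0 (habs v - real m) \<partial>P) \<longlonglongrightarrow> (\<integral>v. 0 \<partial>P)"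
  proof (rule integral_dominated_convergence[where w=habs])
    show "(\<lambda>v. 0::real) \<in> borel_measurable P" by simp
    show "(\<lambda>v. max 0 (habs v - real m)) \<in> borel_measurable P" for m
      unfolding measurable_cong_sets[OF sets_P refl] by measurable
    show "integrable P habs" by (rule int_P_habs)
    show "AE v in P. (\<lambda>m. max 0 (habs v - real m)) \<longlonglongrightarrow> 0"
    proof (rule AE_I2)
      fix v
      have "eventually (\<lambda>m. max 0 (habs v - real m) = 0) sequentially"
        unfolding eventually_sequentially
      proof (rule exI[of _ "nat \<lceil>habs v\<rceil>"], intro allI impI)
        fix m assume "nat \<lceil>habs v\<rceil> \<le> m"
        then have "habs v \<le> real m" using real_nat_ceiling_ge[of "habs v"] of_nat_mono[of "nat \<lceil>habs v\<rceil>" m] by linarith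
        then show "max 0 (habs v - real m) = 0" by simp
      qed
      then show "(\<lambda>m. max 0 (habs v - real m)) \<longlonglongrightarrow> 0" by (rule tendsto_eventually)
    qed
    show "AE v in P. norm (max 0 (habs v - real m)) \<le> habs v" for m
      by (rule AE_I2) (auto simp: habs_nonneg)
  qed
  then show ?thesis by simp
qed

lemma converge: "(\<lambda>N. \<integral>x. Smax N x \<partial>Pn (N*K)) \<longlonglongrightarrow> fernique P mu"
proof (rule LIMSEQ_I)
  fix r :: real assume r: "0 < r"
  define e where "e = r / 5"
  have e: "0 < e" using r by (simp add: e_def)
  have "fernique P mu - e < fernique P mu" using e by simp
  then obtain Q where cQ: "coupling P mu Q" and EQ: "fernique P mu - e < (\<integral>p. fst p $ snd p \<partial>Q)"
    unfolding fernique_def[of P mu] using less_cSUP_iff[OF cpl_exists fernique_bdd] by auto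
  obtain m0 where m0: "\<forall>m\<ge>m0. norm ((\<integral>v. max 0 (habs v - real m) \<partial>P) - 0) < e / 2"
    using LIMSEQ_D[OF tail, of "e/2"] e by auto
  define L where "L = real m0"
  have L: "0 \<le> L" by (simp add: L_def)
  have tailL: "2 * (\<integral>v. max 0 (habs v - L) \<partial>P) < e" using m0[rule_format, of m0] by (simp add: L_def)
  define cc where "cc = real CARD('n)"
  have cc: "0 \<le> cc" by (simp add: cc_def)
  define a where "a = 2 * L * cc / e + 1"
  have a: "0 < a" using L cc e by (simp add: a_def add_nonneg_pos)
  have t1: "2 * L * cc / a < e"
  proof -
    have "2 * L * cc < e * a" using e L cc by (simp add: a_def field_simps)
    then show ?thesis using a by (simp add: divide_less_eq mult.commute)
  qed
  define N0 where "N0 = nat \<lceil>2 * L * cc * a / e\<rceil> + 1"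
  show "\<exists>no. \<forall>N\<ge>no. norm ((\<integral>x. Smax N x \<partial>Pn (N*K)) - fernique P mu) < r"
  proof (intro exI allI impI)
    fix N assume N: "N0 \<le> N"
    then have Npos: "0 < N" by (simp add: N0_def)
    have "2 * L * cc * a / e < real N" using N unfolding N0_def by linarith
    also have "real N \<le> real (N*K)" by (intro of_nat_mono) (use Kpos in simp)
    finally have "2 * L * cc * a < e * real (N*K)" using e by (simp add: divide_less_eq mult.commute)
    then have t2: "2 * L * cc * a / real (N*K) < e" using Npos Kpos by (simp add: divide_less_eq mult.commute)
    have lb: "(\<integral>p. fst p $ snd p \<partial>Q) - 2 * L * cc / a - 2 * L * cc * a / real (N*K)
           - 2 * (\<integral>v. max 0 (habs v - L) \<partial>P) \<le> (\<integral>x. Smax N x \<partial>Pn (N*K))"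
      using lower_bound[OF cQ Npos L a] by (simp add: cc_def)
    have ub: "(\<integral>x. Smax N x \<partial>Pn (N*K)) \<le> fernique P mu" by (rule upper[OF Npos])
    show "norm ((\<integral>x. Smax N x \<partial>Pn (N*K)) - fernique P mu) < r"
      using lb ub t1 t2 tailL EQ unfolding e_def by (simp add: abs_if)
  qed
qed

end


theorem proposition3:
  fixes M :: "'w measure" and X :: "'w \<Rightarrow> real ^ 'n::finite"
    and M' :: "'v measure" and Y :: "nat \<Rightarrow> 'v \<Rightarrow> real ^ 'n"
    and K :: nat and mu :: "'n pmf"
  assumes "prob_space M"
    and "X \<in> borel_measurable M"
    and "\<And>t. integrable M (\<lambda>\<omega>. X \<omega> $ t)"
    and "0 < K" and "in_PK K mu"
    and "prob_space M'"
    and "prob_space.indep_vars M' (\<lambda>_. borel) Y UNIV"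
    and "\<And>i. Y i \<in> borel_measurable M'"
    and "\<And>i. distr M' borel (Y i) = distr M borel X"
  shows "(\<lambda>N. \<integral>\<omega>. (MAX ts \<in> typeclass_seqs K N mu.
              (1 / real (length ts)) * (\<Sum>i<length ts. Y i \<omega> $ (ts ! i))) \<partial>M')
          \<longlonglongrightarrow> fernique (distr M borel X) mu"
proof -
  interpret S: setting M X K mu by (rule setting.intro) (fact assms)+
  interpret M': prob_space M' by (rule assms(6))
  have eq: "(\<integral>\<omega>. (MAX ts \<in> typeclass_seqs K N mu.
              (1 / real (length ts)) * (\<Sum>i<length ts. Y i \<omega> $ (ts ! i))) \<partial>M')
        = (\<integral>x. S.Smax N x \<partial>S.Pn (N*K))" if N: "0 < N" for N
  proof -
    define I where "I = {..<N*K}"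
    have Ine: "I \<noteq> {}" proof -
      have "0 \<in> I" using N assms(4) by (simp add: I_def)
      then show ?thesis by blast
    qed
    have rv: "\<And>i. M'.random_variable borel (Y i)" using assms(8) by simp
    have ind: "M'.indep_vars (\<lambda>_. borel) Y I" using M'.indep_vars_subset[OF assms(7)] by simp
    have "distr M' (PiM I (\<lambda>_. borel)) (\<lambda>\<omega>. \<lambda>i\<in>I. Y i \<omega>) = PiM I (\<lambda>i. distr M' borel (Y i))"
      using M'.indep_vars_iff_distr_eq_PiM[OF Ine rv] ind by simp
    also have "\<dots> = S.Pn (N*K)" unfolding S.Pn_def S.P_def I_def using assms(9) by simp
    finally have d: "distr M' (PiM I (\<lambda>_. borel)) (\<lambda>\<omega>. \<lambda>i\<in>I. Y i \<omega>) = S.Pn (N*K)" .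
    have fm: "(\<lambda>\<omega>. \<lambda>i\<in>I. Y i \<omega>) \<in> measurable M' (PiM I (\<lambda>_. borel))"
      by (rule measurable_restrict) (rule assms(8))
    have Sm: "S.Smax N \<in> borel_measurable (PiM I (\<lambda>_. borel))"
      using S.Smax_meas[of N] unfolding measurable_cong_sets[OF S.sets_Pn refl] I_def .
    have "(\<integral>x. S.Smax N x \<partial>S.Pn (N*K)) = (\<integral>\<omega>. S.Smax N (\<lambda>i\<in>I. Y i \<omega>) \<partial>M')"
      using integral_distr[OF fm Sm] d by simp
    also have "\<dots> = (\<integral>\<omega>. (MAX ts \<in> typeclass_seqs K N mu.
              (1 / real (length ts)) * (\<Sum>i<length ts. Y i \<omega> $ (ts ! i))) \<partial>M')"
    proof (rule Bochner_Integration.integral_cong[OF refl])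
      fix \<omega>
      show "S.Smax N (\<lambda>i\<in>I. Y i \<omega>) = (MAX ts \<in> typeclass_seqs K N mu.
              (1 / real (length ts)) * (\<Sum>i<length ts. Y i \<omega> $ (ts ! i)))"
        unfolding S.Smax_def S.TS_def
      proof (rule arg_cong[where f=Max], rule image_cong[OF refl])
        fix s assume "s \<in> typeclass_seqs K N mu"
        then have ls: "length s = N*K" by (simp add: typeclass_seqs_def)
        have "(\<Sum>i<N*K. (\<lambda>i\<in>I. Y i \<omega>) i $ (s!i)) = (\<Sum>i<N*K. Y i \<omega> $ (s!i))"
          by (rule sum.cong) (auto simp: I_def)
        then show "Vf (N*K) (\<lambda>i\<in>I. Y i \<omega>) s = (1 / real (length s)) * (\<Sum>i<length s. Y i \<omega> $ (s ! i))"
          unfolding Vf_def ls by simp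
      qed
    qed
    finally show ?thesis by simp
  qed
  have ev: "eventually (\<lambda>N. (\<integral>x. S.Smax N x \<partial>S.Pn (N*K)) = (\<integral>\<omega>. (MAX ts \<in> typeclass_seqs K N mu.
              (1 / real (length ts)) * (\<Sum>i<length ts. Y i \<omega> $ (ts ! i))) \<partial>M')) sequentially"
    by (rule eventually_sequentiallyI[of 1]) (rule eq[symmetric]; simp)
  show ?thesis using tendsto_cong[OF ev] S.converge unfolding S.P_def by (rule iffD1)
qed

end
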